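(* Let $\psi,\varphi$ be CNF formulas neither of which contains a tautological clause. If $\psi\models\varphi$, then $\psi[x_\varepsilon]\models\varphi[x_\varepsilon]$ for every variable $x\in\mathrm{Vars}(\varphi)\cup\mathrm{Vars}(\psi)$.
   Context: A CNF formula is a finite set of clauses, each clause a finite set of literals; the empty clause is unsatisfiable and the empty CNF formula is true. A clause is tautological if it contains both $x$ and $\neg x$ for some variable $x$. For a CNF formula $\phi$ and a variable $x$, the deletion reduct $\phi[x_\varepsilon]$ is obtained from $\phi$ by deleting all occurrences of the literals $x$ and $\neg x$ from all clauses (clauses are kept, possibly becoming empty). $\models$ denotes classical propositional entailment. *)

theory Defs
  imports Main
begin

text \<open>A literal is a pair (variable, polarity); True = positive literal x, False = negative literal not x.\<close>
type_synonym 'v lit = "'v \<times> bool"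
type_synonym 'v clause = "'v lit set"
type_synonym 'v cnf = "'v clause set"

definition is_cnf :: "'v cnf \<Rightarrow> bool" where
  "is_cnf \<phi> \<longleftrightarrow> finite \<phi> \<and> (\<forall>C\<in>\<phi>. finite C)"

definition lit_sat :: "('v \<Rightarrow> bool) \<Rightarrow> 'v lit \<Rightarrow> bool" where
  "lit_sat \<alpha> l \<longleftrightarrow> \<alpha> (fst l) = snd l"

definition clause_sat :: "('v \<Rightarrow> bool) \<Rightarrow> 'v clause \<Rightarrow> bool" where
  "clause_sat \<alpha> C \<longleftrightarrow> (\<exists>l\<in>C. lit_sat \<alpha> l)"

definition cnf_sat :: "('v \<Rightarrow> bool) \<Rightarrow> 'v cnf \<Rightarrow> bool" where
  "cnf_sat \<alpha> \<phi> \<longleftrightarrow> (\<forall>C\<in>\<phi>. clause_sat \<alpha> C)"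

definition entails :: "'v cnf \<Rightarrow> 'v cnf \<Rightarrow> bool" (infix "\<Turnstile>\<^sub>c" 50) where
  "\<psi> \<Turnstile>\<^sub>c \<phi> \<longleftrightarrow> (\<forall>\<alpha>. cnf_sat \<alpha> \<psi> \<longrightarrow> cnf_sat \<alpha> \<phi>)"

definition tautological :: "'v clause \<Rightarrow> bool" where
  "tautological C \<longleftrightarrow> (\<exists>x. (x, True) \<in> C \<and> (x, False) \<in> C)"

definition vars :: "'v cnf \<Rightarrow> 'v set" where
  "vars \<phi> = {fst l | l. \<exists>C\<in>\<phi>. l \<in> C}"

definition del_reduct :: "'v cnf \<Rightarrow> 'v \<Rightarrow> 'v cnf" where
  "del_reduct \<phi> x = (\<lambda>C. C - {(x, True), (x, False)}) ` \<phi>"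

end

theory Submission
  imports Defs
begin

theorem mainTheorem3:
  fixes \<psi> \<phi> :: "'v cnf" and x :: 'v
  assumes "is_cnf \<psi>" and "is_cnf \<phi>"
    and "\<forall>C\<in>\<psi>. \<not> tautological C"
    and "\<forall>C\<in>\<phi>. \<not> tautological C"
    and "\<psi> \<Turnstile>\<^sub>c \<phi>"
    and "x \<in> vars \<phi> \<union> vars \<psi>"
  shows "del_reduct \<psi> x \<Turnstile>\<^sub>c del_reduct \<phi> x"
  unfolding entails_def
proof (intro allI impI)
  fix \<alpha> :: "'v \<Rightarrow> bool"
  assume a: "cnf_sat \<alpha> (del_reduct \<psi> x)"
  have sat: "cnf_sat (\<alpha>(x := b)) \<phi>" for b
  proof -
    have "cnf_sat (\<alpha>(x := b)) \<psi>"
      unfolding cnf_sat_def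
    proof
      fix C assume "C \<in> \<psi>"
      then have "clause_sat \<alpha> (C - {(x, True), (x, False)})"
        using a unfolding cnf_sat_def del_reduct_def by blast
      then obtain l where "l \<in> C - {(x, True), (x, False)}" "lit_sat \<alpha> l"
        unfolding clause_sat_def by blast
      then have "l \<in> C" "fst l \<noteq> x" "lit_sat \<alpha> l" by (cases l; auto)+
      then show "clause_sat (\<alpha>(x := b)) C"
        unfolding clause_sat_def lit_sat_def by auto
    qed
    then show ?thesis using assms(5) unfolding entails_def by blast
  qed
  show "cnf_sat \<alpha> (del_reduct \<phi> x)"
    unfolding cnf_sat_def del_reduct_def
  proof
    fix D' assume "D' \<in> (\<lambda>C. C - {(x, True), (x, False)}) ` \<phi>"
    then obtain D where D: "D \<in> \<phi>" "D' = D - {(x, True), (x, False)}" by blast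
    show "clause_sat \<alpha> D'"
    proof (rule ccontr)
      assume n: "\<not> clause_sat \<alpha> D'"
      have "(x, b) \<in> D" for b
      proof -
        from sat[of b] D(1) obtain l where "l \<in> D" "lit_sat (\<alpha>(x := b)) l"
          unfolding cnf_sat_def clause_sat_def by blast
        show ?thesis
        proof (rule ccontr)
          assume nb: "(x, b) \<notin> D"
          obtain v c where l: "l = (v, c)" by (cases l)
          have "l \<in> D'"
          proof (cases "v = x")
            case True
            then show ?thesis using \<open>lit_sat (\<alpha>(x := b)) l\<close> \<open>l \<in> D\<close> nb l
              by (auto simp: lit_sat_def)
          next
            case False
            then show ?thesis using \<open>l \<in> D\<close> D(2) l by auto
          qed
          moreover have "v \<noteq> x" using \<open>lit_sat (\<alpha>(x := b)) l\<close> \<open>l \<in> D\<close> nb l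
            by (auto simp: lit_sat_def)
          ultimately show False using n \<open>lit_sat (\<alpha>(x := b)) l\<close> l
            unfolding clause_sat_def lit_sat_def by auto
        qed
      qed
      then show False using assms(4) D(1) unfolding tautological_def by blast
    qed
  qed
qed

end
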